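(* Let $\mathcal P$ be a pyramid. If there exist $r>0$ and $0<\kappa<1$ such that $\operatorname{Cov}(\mathcal P;r,\kappa)=+\infty$, then there is no mm-space $X$ with $\mathcal P=\mathcal P_X$.
   Context: An mm-space is a triple $(X,d_X,\mu_X)$ with $(X,d_X)$ complete separable metric and $\mu_X$ a Borel probability measure; $\mathcal X$ is the set of mm-isomorphism classes. $Y\prec X$ means there is a 1-Lipschitz $f:X\to Y$ with $f_*\mu_X=\mu_Y$. The box distance $\square(X,Y)$ is the infimum of $\max\{\operatorname{dis}(S),1-\pi(S)\}$ over couplings $\pi$ of $\mu_X,\mu_Y$ and Borel $S\subset X\times Y$, $\operatorname{dis}(S)=\sup\{|d_X(x,x')-d_Y(y,y')|:(x,y),(x',y')\in S\}$. A pyramid is a nonempty box-closed subset of $\mathcal X$ closed downward under $\prec$ and directed; $\mathcal P_X=\{Y\in\mathcal X:Y\prec X\}$. For an mm-space $X$: $\operatorname{Cov}(X;r,\kappa)=\min\{\#\mathcal N:\mathcal N\subset X,\ \mu_X(B_r(\mathcal N))\ge1-\kappa\}$ with $B_r(\mathcal N)=\{x:d_X(x,\mathcal N)\le r\}$; for a pyramid, $\operatorname{Cov}(\mathcal P;r,\kappa)=\sup_{X\in\mathcal P}\operatorname{Cov}(X;r,\kappa)$. *)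

theory Defs
  imports "HOL-Probability.Probability"
begin

text \<open>An mm-space is represented by a pair (d, mu): the carrier is space mu
  (a subset of the reals; every complete separable metric space has cardinality
  at most the continuum, so every mm-space is isomorphic to one of this form),
  d is a metric on it, and mu is a Borel probability measure.\<close>

type_synonym mm = "(real \<Rightarrow> real \<Rightarrow> real) \<times> real measure"

definition mm_space :: "mm \<Rightarrow> bool" where
  "mm_space X \<longleftrightarrow>
     (let d = fst X; \<mu> = snd X; S = space \<mu> in
       Metric_space S d \<and> Metric_space.mcomplete S d \<and>
       separable_space (Metric_space.mtopology S d) \<and>
       sets \<mu> = sigma_sets S {U. openin (Metric_space.mtopology S d) U} \<and>
       prob_space \<mu>)"

definition mm_supp :: "mm \<Rightarrow> real set" where
  "mm_supp X = {x \<in> space (snd X).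
     \<forall>e>0. emeasure (snd X) {y \<in> space (snd X). fst X x y < e} > 0}"

definition mm_iso :: "mm \<Rightarrow> mm \<Rightarrow> bool" where
  "mm_iso X Y \<longleftrightarrow> (\<exists>f. bij_betw f (mm_supp X) (mm_supp Y) \<and>
     (\<forall>x\<in>mm_supp X. \<forall>x'\<in>mm_supp X. fst Y (f x) (f x') = fst X x x') \<and>
     (\<forall>A\<in>sets (snd Y). f -` A \<inter> mm_supp X \<in> sets (snd X) \<and>
          emeasure (snd X) (f -` A \<inter> mm_supp X) = emeasure (snd Y) A))"

definition mm_prec :: "mm \<Rightarrow> mm \<Rightarrow> bool" where
  "mm_prec Y X \<longleftrightarrow> (\<exists>f. f \<in> measurable (snd X) (snd Y) \<and>
     (\<forall>x\<in>space (snd X). \<forall>x'\<in>space (snd X). fst Y (f x) (f x') \<le> fst X x x') \<and>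
     distr (snd X) (snd Y) f = snd Y)"

definition mm_prec_cls :: "mm \<Rightarrow> mm \<Rightarrow> bool" where
  "mm_prec_cls Y X \<longleftrightarrow> (\<exists>Y' X'. mm_space Y' \<and> mm_space X' \<and>
      mm_iso Y Y' \<and> mm_iso X X' \<and> mm_prec Y' X')"

definition coupling :: "mm \<Rightarrow> mm \<Rightarrow> (real \<times> real) measure \<Rightarrow> bool" where
  "coupling X Y \<pi> \<longleftrightarrow> sets \<pi> = sets (snd X \<Otimes>\<^sub>M snd Y) \<and> prob_space \<pi> \<and>
     distr \<pi> (snd X) fst = snd X \<and> distr \<pi> (snd Y) snd = snd Y"

definition mm_dis :: "mm \<Rightarrow> mm \<Rightarrow> (real \<times> real) set \<Rightarrow> ereal" where
  "mm_dis X Y S = (SUP p\<in>S. SUP q\<in>S.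
     ereal \<bar>fst X (fst p) (fst q) - fst Y (snd p) (snd q)\<bar>)"

definition box_dist :: "mm \<Rightarrow> mm \<Rightarrow> ereal" where
  "box_dist X Y = (INF \<pi>S\<in>{(\<pi>, S). coupling X Y \<pi> \<and> S \<in> sets \<pi>}.
     max (mm_dis X Y (snd \<pi>S)) (ereal (1 - measure (fst \<pi>S) (snd \<pi>S))))"

text \<open>A pyramid, as a set of mm-spaces saturated under mm-isomorphism
  (i.e. a subset of the space of isomorphism classes).\<close>
definition pyramid :: "mm set \<Rightarrow> bool" where
  "pyramid P \<longleftrightarrow> P \<subseteq> {X. mm_space X} \<and> P \<noteq> {} \<and>
     (\<forall>X\<in>P. \<forall>Y. mm_space Y \<and> mm_iso X Y \<longrightarrow> Y \<in> P) \<and>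
     (\<forall>X. mm_space X \<and> (\<forall>e>0. \<exists>Y\<in>P. box_dist X Y < ereal e) \<longrightarrow> X \<in> P) \<and>
     (\<forall>X\<in>P. \<forall>Y. mm_space Y \<and> mm_prec_cls Y X \<longrightarrow> Y \<in> P) \<and>
     (\<forall>X\<in>P. \<forall>Y\<in>P. \<exists>Z\<in>P. mm_prec_cls X Z \<and> mm_prec_cls Y Z)"

definition pyramid_of :: "mm \<Rightarrow> mm set" where
  "pyramid_of X = {Y. mm_space Y \<and> mm_prec_cls Y X}"

definition closed_nbhd :: "mm \<Rightarrow> real \<Rightarrow> real set \<Rightarrow> real set" where
  "closed_nbhd X r N = {x \<in> space (snd X). N \<noteq> {} \<and> (INF y\<in>N. fst X x y) \<le> r}"

definition ecard :: "'a set \<Rightarrow> enat" where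
  "ecard N = (if finite N then enat (card N) else \<infinity>)"

definition Cov :: "mm \<Rightarrow> real \<Rightarrow> real \<Rightarrow> enat" where
  "Cov X r \<kappa> = (INF N\<in>{N. N \<subseteq> space (snd X) \<and>
       measure (snd X) (closed_nbhd X r N) \<ge> 1 - \<kappa>}. ecard N)"

definition Cov_pyr :: "mm set \<Rightarrow> real \<Rightarrow> real \<Rightarrow> enat" where
  "Cov_pyr P r \<kappa> = (SUP X\<in>P. Cov X r \<kappa>)"

end

theory Submission
  imports Defs
begin

lemma mmD:
  assumes "mm_space (d, \<mu>)"
  shows "Metric_space (space \<mu>) d" "prob_space \<mu>"
    "separable_space (Metric_space.mtopology (space \<mu>) d)"
    "sets \<mu> = sigma_sets (space \<mu>) {U. openin (Metric_space.mtopology (space \<mu>) d) U}"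
  using assms unfolding mm_space_def Let_def by auto

lemma mm_open_sets:
  assumes "mm_space (d, \<mu>)" "openin (Metric_space.mtopology (space \<mu>) d) U"
  shows "U \<in> sets \<mu>"
  using mmD(4)[OF assms(1)] assms(2) by (auto intro: sigma_sets.Basic)

lemma mm_closed_sets:
  assumes "mm_space (d, \<mu>)" "closedin (Metric_space.mtopology (space \<mu>) d) C"
  shows "C \<in> sets \<mu>"
proof -
  interpret Metric_space "space \<mu>" d by (rule mmD(1)[OF assms(1)])
  have sub: "C \<subseteq> space \<mu>" using closedin_subset assms(2) by force
  have "space \<mu> - C \<in> sets \<mu>"
    using assms(2) mm_open_sets[OF assms(1)] unfolding closedin_def by auto
  then have "space \<mu> - (space \<mu> - C) \<in> sets \<mu>" by (rule sets.compl_sets)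
  then show ?thesis using sub by (simp add: double_diff)
qed

lemma mm_ball_sets:
  assumes "mm_space (d, \<mu>)" "x \<in> space \<mu>"
  shows "{y \<in> space \<mu>. d x y < e} \<in> sets \<mu>"
proof -
  interpret Metric_space "space \<mu>" d by (rule mmD(1)[OF assms(1)])
  have "{y \<in> space \<mu>. d x y < e} = mball x e" using assms(2) by (auto simp: mball_def)
  then show ?thesis using mm_open_sets[OF assms(1)] by simp
qed

lemma INF_fin_le_iff:
  fixes f :: "'a \<Rightarrow> real"
  assumes "finite N" "N \<noteq> {}"
  shows "(INF y\<in>N. f y) \<le> r \<longleftrightarrow> (\<exists>y\<in>N. f y \<le> r)"
  using assms by (simp add: cInf_eq_Min Min_le_iff)

lemma closed_nbhd_sets:
  assumes "mm_space (d, \<mu>)" "finite N" "N \<noteq> {}" "N \<subseteq> space \<mu>"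
  shows "closed_nbhd (d, \<mu>) r N \<in> sets \<mu>"
proof -
  interpret Metric_space "space \<mu>" d by (rule mmD(1)[OF assms(1)])
  have "closed_nbhd (d, \<mu>) r N = (\<Union>y\<in>N. mcball y r)"
    using assms(2-4) by (auto simp: closed_nbhd_def INF_fin_le_iff mcball_def commute)
  also have "\<dots> \<in> sets \<mu>"
    using assms(2) mm_closed_sets[OF assms(1)] by (intro sets.finite_UN) auto
  finally show ?thesis .
qed


lemma supp_space: "mm_supp X \<subseteq> space (snd X)"
  by (auto simp: mm_supp_def)

lemma iso_supp_full:
  assumes "mm_iso X X'" "prob_space (snd X')"
  shows "mm_supp X \<in> sets (snd X)" "measure (snd X) (mm_supp X) = 1"
proof -
  obtain f where bij: "bij_betw f (mm_supp X) (mm_supp X')"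
    and m: "\<forall>A\<in>sets (snd X'). f -` A \<inter> mm_supp X \<in> sets (snd X) \<and>
          emeasure (snd X) (f -` A \<inter> mm_supp X) = emeasure (snd X') A"
    using assms(1) unfolding mm_iso_def by blast
  have eq: "f -` space (snd X') \<inter> mm_supp X = mm_supp X"
    using bij supp_space[of X'] by (auto simp: bij_betw_def)
  show "mm_supp X \<in> sets (snd X)" using m eq by (metis sets.top)
  have "emeasure (snd X) (mm_supp X) = 1"
    using m eq prob_space.emeasure_space_1[OF assms(2)] by (metis sets.top)
  then show "measure (snd X) (mm_supp X) = 1" by (simp add: measure_def)
qed

lemma prec_supp:
  assumes X: "mm_space (dX, \<mu>X)" and Y: "mm_space (dY, \<mu>Y)"
    and hm: "h \<in> measurable \<mu>X \<mu>Y"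
    and lip: "\<forall>x\<in>space \<mu>X. \<forall>x'\<in>space \<mu>X. dY (h x) (h x') \<le> dX x x'"
    and distr: "distr \<mu>X \<mu>Y h = \<mu>Y"
  shows "h ` mm_supp (dX, \<mu>X) \<subseteq> mm_supp (dY, \<mu>Y)"
proof
  fix z assume "z \<in> h ` mm_supp (dX, \<mu>X)"
  then obtain x where x: "x \<in> mm_supp (dX, \<mu>X)" and z: "z = h x" by blast
  have xs: "x \<in> space \<mu>X" using x by (auto simp: mm_supp_def)
  have zs: "z \<in> space \<mu>Y" using hm xs z by (auto simp: measurable_def)
  show "z \<in> mm_supp (dY, \<mu>Y)"
    unfolding mm_supp_def
  proof (simp add: zs, intro allI impI)
    fix e :: real assume e: "e > 0"
    let ?B = "{y \<in> space \<mu>Y. dY z y < e}"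
    let ?Bx = "{y \<in> space \<mu>X. dX x y < e}"
    have B: "?B \<in> sets \<mu>Y" using mm_ball_sets[OF Y zs] .
    have Bx: "?Bx \<in> sets \<mu>X" using mm_ball_sets[OF X xs] .
    have "0 < emeasure \<mu>X ?Bx" using x e by (auto simp: mm_supp_def)
    also have "\<dots> \<le> emeasure \<mu>X (h -` ?B \<inter> space \<mu>X)"
    proof (rule emeasure_mono)
      show "?Bx \<subseteq> h -` ?B \<inter> space \<mu>X"
      proof
        fix y assume y: "y \<in> ?Bx"
        then have "h y \<in> space \<mu>Y" using hm by (auto simp: measurable_def)
        moreover have "dY z (h y) < e" using lip xs y z by force
        ultimately show "y \<in> h -` ?B \<inter> space \<mu>X" using y by auto
      qed
      show "h -` ?B \<inter> space \<mu>X \<in> sets \<mu>X" using hm B by (rule measurable_sets)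
    qed
    also have "\<dots> = emeasure (distr \<mu>X \<mu>Y h) ?B" using hm B by (simp add: emeasure_distr)
    also have "\<dots> = emeasure \<mu>Y ?B" using distr by simp
    finally show "0 < emeasure \<mu>Y ?B" .
  qed
qed


lemma net_exists:
  assumes X: "mm_space (d, \<mu>)" and A: "A = mm_supp (d, \<mu>)" "A \<in> sets \<mu>" "measure \<mu> A = 1"
    and r: "r > 0" and k: "\<kappa> > 0" "\<kappa> < 1"
  shows "\<exists>N. finite N \<and> N \<noteq> {} \<and> N \<subseteq> A \<and> measure \<mu> (closed_nbhd (d, \<mu>) r N \<inter> A) > 1 - \<kappa>"
proof -
  interpret Metric_space "space \<mu>" d by (rule mmD(1)[OF X])
  interpret prob_space \<mu> by (rule mmD(2)[OF X])
  obtain D where D: "countable D" "D \<subseteq> space \<mu>" "mtopology closure_of D = space \<mu>"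
    using mmD(3)[OF X] unfolding separable_space_def by auto
  have Asub: "A \<subseteq> space \<mu>" using A(1) supp_space[of "(d, \<mu>)"] by simp
  have "A \<noteq> {}" using A(3) by auto
  then have "D \<noteq> {}" using D(3) Asub by auto
  define e where "e = from_nat_into D"
  have rng: "range e = D" using D(1) \<open>D \<noteq> {}\<close> by (simp add: e_def range_from_nat_into)
  have eD: "e k \<in> space \<mu>" for k using rng D(2) by auto
  define U where "U n = (\<Union>k\<le>n. mball (e k) (r/2)) \<inter> A" for n
  have inc: "incseq U" unfolding incseq_def U_def by fastforce
  have Us: "range U \<subseteq> sets \<mu>"
    using mm_open_sets[OF X] A(2) unfolding U_def by auto
  have UA: "(\<Union>(range U)) = A"
  proof
    show "\<Union>(range U) \<subseteq> A" unfolding U_def by auto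
    show "A \<subseteq> \<Union>(range U)"
    proof
      fix a assume a: "a \<in> A"
      then have "a \<in> mtopology closure_of D" using D(3) Asub by auto
      then have "\<forall>\<rho>>0. \<exists>y\<in>D. y \<in> mball a \<rho>" by (simp add: metric_closure_of)
      moreover have "r/2 > 0" using r by simp
      ultimately obtain y where y: "y \<in> D" "y \<in> mball a (r/2)" by blast
      then obtain k where "y = e k" using rng by auto
      then have "a \<in> mball (e k) (r/2)" using y a Asub by (auto simp: commute)
      then show "a \<in> \<Union>(range U)" using a unfolding U_def by blast
    qed
  qed
  have "(\<lambda>n. measure \<mu> (U n)) \<longlonglongrightarrow> measure \<mu> A"
    using finite_Lim_measure_incseq[OF Us inc] UA by simp
  moreover have "1 - \<kappa> < measure \<mu> A" using A(3) k by simp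
  ultimately have "eventually (\<lambda>n. 1 - \<kappa> < measure \<mu> (U n)) sequentially"
    by (rule order_tendstoD(1))
  then obtain n where n: "1 - \<kappa> < measure \<mu> (U n)" by (auto simp: eventually_sequentially)
  define K where "K = {k. k \<le> n \<and> mball (e k) (r/2) \<inter> A \<noteq> {}}"
  define s where "s k = (SOME x. x \<in> mball (e k) (r/2) \<inter> A)" for k
  have sK: "s k \<in> mball (e k) (r/2) \<inter> A" if "k \<in> K" for k
  proof -
    have "\<exists>x. x \<in> mball (e k) (r/2) \<inter> A" using that unfolding K_def by auto
    then show ?thesis unfolding s_def by (rule someI_ex)
  qed
  define N where "N = s ` K"
  have fin: "finite N" unfolding N_def K_def by auto
  have NA: "N \<subseteq> A" using sK unfolding N_def by auto
  have sub: "U n \<subseteq> closed_nbhd (d, \<mu>) r N \<inter> A"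
  proof
    fix x assume x: "x \<in> U n"
    then obtain k where k: "k \<le> n" "x \<in> mball (e k) (r/2)" "x \<in> A" unfolding U_def by auto
    then have kK: "k \<in> K" unfolding K_def by auto
    have "d x (s k) \<le> d x (e k) + d (e k) (s k)"
      using k sK[OF kK] by (intro triangle) auto
    also have "\<dots> < r" using k sK[OF kK] by (auto simp: commute)
    finally have "d x (s k) \<le> r" by simp
    moreover have "N \<noteq> {}" using kK N_def by auto
    ultimately show "x \<in> closed_nbhd (d, \<mu>) r N \<inter> A"
      using k Asub fin kK unfolding closed_nbhd_def
      by (auto simp: INF_fin_le_iff N_def)
  qed
  have "U n \<noteq> {}" using n k by auto
  then have Nne: "N \<noteq> {}" using sub by (auto simp: closed_nbhd_def)
  have "closed_nbhd (d, \<mu>) r N \<inter> A \<in> sets \<mu>"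
    using closed_nbhd_sets[OF X fin Nne] NA Asub A(2) by auto
  then have "measure \<mu> (U n) \<le> measure \<mu> (closed_nbhd (d, \<mu>) r N \<inter> A)"
    using sub by (intro finite_measure_mono)
  then show ?thesis using n fin Nne NA by (intro exI[of _ N]) auto
qed


lemma closed_nbhd_iff:
  assumes "finite N" "N \<noteq> {}"
  shows "x \<in> closed_nbhd X r N \<longleftrightarrow> x \<in> space (snd X) \<and> (\<exists>y\<in>N. fst X x y \<le> r)"
  using assms by (simp add: closed_nbhd_def INF_fin_le_iff)

lemma transfer:
  assumes X: "mm_space (dX, \<mu>X)" and N: "finite N" "N \<noteq> {}" "N \<subseteq> mm_supp (dX, \<mu>X)"
    and hN: "measure \<mu>X (closed_nbhd (dX, \<mu>X) r N \<inter> mm_supp (dX, \<mu>X)) \<ge> 1 - \<kappa>"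
    and Y: "mm_space (dY, \<mu>Y)" and prec: "mm_prec_cls (dY, \<mu>Y) (dX, \<mu>X)"
  shows "Cov (dY, \<mu>Y) r \<kappa> \<le> enat (card N)"
proof -
  obtain Y' X' where Y': "mm_space Y'" and X': "mm_space X'" and isoY: "mm_iso (dY, \<mu>Y) Y'"
    and isoX: "mm_iso (dX, \<mu>X) X'" and pr: "mm_prec Y' X'"
    using prec unfolding mm_prec_cls_def by blast
  obtain dY' \<mu>Y' where Y'eq: "Y' = (dY', \<mu>Y')" by (cases Y')
  obtain dX' \<mu>X' where X'eq: "X' = (dX', \<mu>X')" by (cases X')
  note Y' = Y'[unfolded Y'eq] and X' = X'[unfolded X'eq]
  note isoY = isoY[unfolded Y'eq] and isoX = isoX[unfolded X'eq] and pr = pr[unfolded Y'eq X'eq]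
  define AX where "AX = mm_supp (dX, \<mu>X)"
  define AY where "AY = mm_supp (dY, \<mu>Y)"
  define AX' where "AX' = mm_supp (dX', \<mu>X')"
  define AY' where "AY' = mm_supp (dY', \<mu>Y')"
  obtain g where gb: "bij_betw g AX AX'"
    and gi: "\<forall>x\<in>AX. \<forall>x'\<in>AX. dX' (g x) (g x') = dX x x'"
    and gm: "\<forall>A\<in>sets \<mu>X'. g -` A \<inter> AX \<in> sets \<mu>X \<and>
          emeasure \<mu>X (g -` A \<inter> AX) = emeasure \<mu>X' A"
    using isoX unfolding mm_iso_def AX_def AX'_def snd_conv fst_conv by blast
  obtain f where fb: "bij_betw f AY AY'"
    and fi: "\<forall>x\<in>AY. \<forall>x'\<in>AY. dY' (f x) (f x') = dY x x'"
    and fm: "\<forall>A\<in>sets \<mu>Y'. f -` A \<inter> AY \<in> sets \<mu>Y \<and>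
          emeasure \<mu>Y (f -` A \<inter> AY) = emeasure \<mu>Y' A"
    using isoY unfolding mm_iso_def AY_def AY'_def snd_conv fst_conv by blast
  obtain h where hm: "h \<in> measurable \<mu>X' \<mu>Y'"
    and lip: "\<forall>x\<in>space \<mu>X'. \<forall>x'\<in>space \<mu>X'. dY' (h x) (h x') \<le> dX' x x'"
    and hd: "distr \<mu>X' \<mu>Y' h = \<mu>Y'"
    using pr unfolding mm_prec_def snd_conv fst_conv by blast
  have hA: "h ` AX' \<subseteq> AY'" unfolding AX'_def AY'_def by (rule prec_supp[OF X' Y' hm lip hd])
  have AXs: "AX \<subseteq> space \<mu>X" and AYs: "AY \<subseteq> space \<mu>Y" and AX's: "AX' \<subseteq> space \<mu>X'"
    and AY's: "AY' \<subseteq> space \<mu>Y'"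
    unfolding AX_def AY_def AX'_def AY'_def using supp_space[of "(dX, \<mu>X)"] supp_space[of "(dY, \<mu>Y)"]
      supp_space[of "(dX', \<mu>X')"] supp_space[of "(dY', \<mu>Y')"] by simp_all
  define F where "F n = inv_into AY f (h (g n))" for n
  have gN: "g n \<in> AX'" if "n \<in> N" for n using that N(3) gb by (auto simp: AX_def bij_betw_def)
  have hgN: "h (g n) \<in> AY'" if "n \<in> N" for n using gN[OF that] hA by auto
  have FA: "F n \<in> AY" if "n \<in> N" for n
    using hgN[OF that] fb unfolding F_def by (metis bij_betw_def inv_into_into)
  have fF: "f (F n) = h (g n)" if "n \<in> N" for n
    using hgN[OF that] fb unfolding F_def by (metis bij_betw_def f_inv_into_f)
  define M where "M = F ` N"
  have Mfin: "finite M" "M \<noteq> {}" using N unfolding M_def by auto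
  have MA: "M \<subseteq> AY" using FA unfolding M_def by auto
  define NY' where "NY' = (\<lambda>n. h (g n)) ` N"
  have NY'fin: "finite NY'" "NY' \<noteq> {}" "NY' \<subseteq> space \<mu>Y'" using N hgN AY's unfolding NY'_def by auto
  define NX' where "NX' = g ` N"
  have NX'fin: "finite NX'" "NX' \<noteq> {}" "NX' \<subseteq> space \<mu>X'" using N gN AX's unfolding NX'_def by auto
  define CY where "CY = closed_nbhd (dY, \<mu>Y) r M"
  define CY' where "CY' = closed_nbhd (dY', \<mu>Y') r NY'"
  define CX' where "CX' = closed_nbhd (dX', \<mu>X') r NX'"
  define CX where "CX = closed_nbhd (dX, \<mu>X) r N"
  have CYs: "CY \<in> sets \<mu>Y" unfolding CY_def using closed_nbhd_sets[OF Y Mfin] MA AYs by auto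
  have CY's: "CY' \<in> sets \<mu>Y'" unfolding CY'_def using closed_nbhd_sets[OF Y' NY'fin(1,2,3)] .
  have CX's: "CX' \<in> sets \<mu>X'" unfolding CX'_def using closed_nbhd_sets[OF X' NX'fin(1,2,3)] .
  interpret pY: prob_space \<mu>Y by (rule mmD(2)[OF Y])
  interpret pY': prob_space \<mu>Y' by (rule mmD(2)[OF Y'])
  interpret pX: prob_space \<mu>X by (rule mmD(2)[OF X])
  interpret pX': prob_space \<mu>X' by (rule mmD(2)[OF X'])
  have s1: "f -` CY' \<inter> AY \<subseteq> CY"
  proof
    fix y assume y: "y \<in> f -` CY' \<inter> AY"
    then have "f y \<in> CY'" by simp
    then obtain n where n: "n \<in> N" "dY' (f y) (h (g n)) \<le> r"
      using closed_nbhd_iff[OF NY'fin(1,2)] unfolding CY'_def NY'_def by auto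
    have "dY y (F n) = dY' (f y) (f (F n))" using fi y FA[OF n(1)] by auto
    then have "dY y (F n) \<le> r" using n fF by simp
    moreover have "y \<in> space \<mu>Y" using y AYs by auto
    moreover have "F n \<in> M" using n(1) unfolding M_def by simp
    ultimately show "y \<in> CY" unfolding CY_def using closed_nbhd_iff[OF Mfin] by auto
  qed
  have "measure \<mu>Y' CY' = measure \<mu>Y (f -` CY' \<inter> AY)"
    using fm CY's by (simp add: measure_def)
  also have "\<dots> \<le> measure \<mu>Y CY" using s1 CYs by (intro pY.finite_measure_mono)
  finally have m1: "measure \<mu>Y' CY' \<le> measure \<mu>Y CY" .
  have "measure \<mu>Y' CY' = measure (distr \<mu>X' \<mu>Y' h) CY'" using hd by simp
  also have "\<dots> = measure \<mu>X' (h -` CY' \<inter> space \<mu>X')" using hm CY's by (rule measure_distr)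
  finally have m2: "measure \<mu>Y' CY' = measure \<mu>X' (h -` CY' \<inter> space \<mu>X')" .
  have s2: "CX' \<subseteq> h -` CY' \<inter> space \<mu>X'"
  proof
    fix x assume x: "x \<in> CX'"
    then obtain n where n: "n \<in> N" "dX' x (g n) \<le> r" and xs: "x \<in> space \<mu>X'"
      using closed_nbhd_iff[OF NX'fin(1,2)] unfolding CX'_def NX'_def by auto
    have "dY' (h x) (h (g n)) \<le> r" using lip xs gN[OF n(1)] AX's n(2) by force
    moreover have "h x \<in> space \<mu>Y'" using hm xs by (auto simp: measurable_def)
    ultimately have "h x \<in> CY'"
      using n closed_nbhd_iff[OF NY'fin(1,2)] unfolding CY'_def NY'_def by auto
    then show "x \<in> h -` CY' \<inter> space \<mu>X'" using xs by simp
  qed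
  have m3: "measure \<mu>X' CX' \<le> measure \<mu>X' (h -` CY' \<inter> space \<mu>X')"
    using s2 measurable_sets[OF hm CY's] by (intro pX'.finite_measure_mono)
  have s3: "CX \<inter> AX \<subseteq> g -` CX' \<inter> AX"
  proof
    fix x assume x: "x \<in> CX \<inter> AX"
    then obtain n where n: "n \<in> N" "dX x n \<le> r"
      using closed_nbhd_iff[OF N(1,2)] unfolding CX_def by auto
    have "dX' (g x) (g n) = dX x n" using gi x n N(3) unfolding AX_def by blast
    moreover have "g x \<in> space \<mu>X'" using x gb AX's by (auto simp: bij_betw_def)
    ultimately have "g x \<in> CX'"
      using n closed_nbhd_iff[OF NX'fin(1,2)] unfolding CX'_def NX'_def by (auto intro!: bexI[of _ n])
    then show "x \<in> g -` CX' \<inter> AX" using x by simp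
  qed
  have "measure \<mu>X (CX \<inter> AX) \<le> measure \<mu>X (g -` CX' \<inter> AX)"
    using s3 gm CX's by (intro pX.finite_measure_mono) auto
  also have "\<dots> = measure \<mu>X' CX'" using gm CX's by (simp add: measure_def)
  finally have m4: "measure \<mu>X (CX \<inter> AX) \<le> measure \<mu>X' CX'" .
  have "1 - \<kappa> \<le> measure \<mu>Y CY"
    using hN m1 m2 m3 m4 unfolding CX_def AX_def by linarith
  then have "M \<in> {N. N \<subseteq> space (snd (dY, \<mu>Y)) \<and> measure (snd (dY, \<mu>Y)) (closed_nbhd (dY, \<mu>Y) r N) \<ge> 1 - \<kappa>}"
    using MA AYs unfolding CY_def by auto
  then have "Cov (dY, \<mu>Y) r \<kappa> \<le> ecard M" unfolding Cov_def by (rule INF_lower)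
  also have "\<dots> = enat (card M)" using Mfin by (simp add: ecard_def)
  also have "\<dots> \<le> enat (card N)" unfolding M_def by (simp add: card_image_le N(1))
  finally show ?thesis .
qed


theorem corollary6p7:
  assumes "pyramid P"
    and "r > 0" and "0 < \<kappa>" and "\<kappa> < 1"
    and "Cov_pyr P r \<kappa> = \<infinity>"
  shows "\<not> (\<exists>X. mm_space X \<and> P = pyramid_of X)"
proof
  assume "\<exists>X. mm_space X \<and> P = pyramid_of X"
  then obtain d \<mu> where X: "mm_space (d, \<mu>)" and P: "P = pyramid_of (d, \<mu>)" by (metis prod.collapse)
  have "P \<noteq> {}" using assms(1) unfolding pyramid_def by (elim conjE)
  then obtain Y0 where "Y0 \<in> P" by blast
  then have "mm_prec_cls Y0 (d, \<mu>)" using P by (simp add: pyramid_of_def)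
  then obtain X' where iso: "mm_iso (d, \<mu>) X'" and X': "mm_space X'"
    unfolding mm_prec_cls_def by blast
  have ps: "prob_space (snd X')" using X' mmD(2)[of "fst X'" "snd X'"] by simp
  have As: "mm_supp (d, \<mu>) \<in> sets \<mu>" and Am: "measure \<mu> (mm_supp (d, \<mu>)) = 1"
    using iso_supp_full[OF iso ps] by simp_all
  obtain N where N: "finite N" "N \<noteq> {}" "N \<subseteq> mm_supp (d, \<mu>)"
    and hN: "measure \<mu> (closed_nbhd (d, \<mu>) r N \<inter> mm_supp (d, \<mu>)) > 1 - \<kappa>"
    using net_exists[OF X refl As Am assms(2-4)] by blast
  have "Cov Y r \<kappa> \<le> enat (card N)" if "Y \<in> P" for Y
  proof -
    have Y: "mm_space (fst Y, snd Y)" "mm_prec_cls (fst Y, snd Y) (d, \<mu>)"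
      using that P by (simp_all add: pyramid_of_def)
    have "Cov (fst Y, snd Y) r \<kappa> \<le> enat (card N)"
      using transfer[OF X N _ Y] hN by simp
    then show ?thesis by simp
  qed
  then have "Cov_pyr P r \<kappa> \<le> enat (card N)" unfolding Cov_pyr_def by (rule SUP_least)
  then show False using assms(5) by simp
qed

end
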